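(* For $n\ge1$, let $P_n$ be the number of pairs $(T,p)$ with $T$ a rooted tree on vertex set $[n]$ and $p$ a prime parking function on $T$, and let $\mathcal{SRP}_n$ be the set of standardized restricted prime parking functions on $n$ vertices. Then \[ P_n=n!\,|\mathcal{SRP}_n|. \]
   Context: A rooted tree on $[n]$ has its edges oriented towards the root; the edge $u\to v$ is written $(u,v)$. For $p\in[n]^n$, drivers $1,\dots,n$ arrive in order; driver $i$ parks at $p_i$ if unoccupied, otherwise follows the directed path towards the root and parks at the first unoccupied vertex, leaving if none exists. $(T,p)$ is a parking function if all drivers park. $T_v$ is the set of vertices with a directed path to $v$ (including $v$); $(T,p)$ is prime if $|T_v|<|\{i:p_i\in T_v\}|$ for every non-root $v$. An edge is crossed/used by a driver if she crosses it after failing to park at her preferred vertex. An ordered (plane) tree is a rooted tree in which the children of each vertex are linearly ordered (left to right). Post-order labeling of an ordered tree with $n$ vertices assigns labels $1,\dots,n$ so that each vertex is labeled after all vertices in the subtrees of its children, and the subtrees of children are labeled from left to right (i.e. the standard post-order traversal). A pair $(\mathcal T,p)$ with $\mathcal T$ an ordered tree with $|\mathcal T|=n$ and $p\in[n]^n$ is a standardized restricted prime parking function if: (1) $(\mathcal T,p)$ is a prime parking function when $\mathcal T$ is regarded as an unordered rooted tree; (2) for any two siblings $u,v$ with parent $w$, $v$ is ordered to the right of $u$ if and only if the edge $(v,w)$ is crossed by some driver before the edge $(u,w)$ is first crossed during the parking procedure; (3) $\mathcal T$ is labeled by post-order. $\mathcal{SRP}_n$ is the set of all such pairs. *)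

theory Defs
  imports Main
begin

text \<open>A rooted tree on vertex set {1..n} is given by its parent function: the edge
  (u, par u) for every non-root u.  The root has parent 0 (0 is not a vertex);
  outside {1..n} the function is 0 (extensionality).\<close>

definition is_rtree :: "nat \<Rightarrow> (nat \<Rightarrow> nat) \<Rightarrow> bool" where
  "is_rtree n par \<longleftrightarrow>
     (\<forall>v. v \<notin> {1..n} \<longrightarrow> par v = 0) \<and>
     (\<forall>v\<in>{1..n}. par v \<le> n) \<and>
     card {v\<in>{1..n}. par v = 0} = 1 \<and>
     (\<forall>v\<in>{1..n}. \<exists>k. (par ^^ k) v = 0)"

definition subtree :: "nat \<Rightarrow> (nat \<Rightarrow> nat) \<Rightarrow> nat \<Rightarrow> nat set" where
  "subtree n par v = {u\<in>{1..n}. \<exists>k. (par ^^ k) u = v}"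

text \<open>Preference lists p: lists of length n, driver i (0-based here) prefers p!i.
  Given the set of occupied vertices, a driver preferring a parks at the first
  unoccupied vertex on the path a, par a, par (par a), ...; the result 0 means
  she reaches beyond the root and leaves.\<close>

definition spot :: "(nat \<Rightarrow> nat) \<Rightarrow> nat set \<Rightarrow> nat \<Rightarrow> nat" where
  "spot par occ a = (par ^^ (LEAST k. (par ^^ k) a \<notin> occ)) a"

definition occ_after :: "(nat \<Rightarrow> nat) \<Rightarrow> nat list \<Rightarrow> nat set" where
  "occ_after par ps =
     fold (\<lambda>a occ. let s = spot par occ a in if s = 0 then occ else insert s occ) ps {}"

definition occ_before :: "(nat \<Rightarrow> nat) \<Rightarrow> nat list \<Rightarrow> nat \<Rightarrow> nat set" where
  "occ_before par p i = occ_after par (take i p)"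

definition is_pref :: "nat \<Rightarrow> nat list \<Rightarrow> bool" where
  "is_pref n p \<longleftrightarrow> length p = n \<and> set p \<subseteq> {1..n}"

definition parking_function :: "nat \<Rightarrow> (nat \<Rightarrow> nat) \<Rightarrow> nat list \<Rightarrow> bool" where
  "parking_function n par p \<longleftrightarrow>
     (\<forall>i<n. spot par (occ_before par p i) (p ! i) \<noteq> 0)"

definition prime_pf :: "nat \<Rightarrow> (nat \<Rightarrow> nat) \<Rightarrow> nat list \<Rightarrow> bool" where
  "prime_pf n par p \<longleftrightarrow> parking_function n par p \<and>
     (\<forall>v\<in>{1..n}. par v \<noteq> 0 \<longrightarrow>
        card (subtree n par v) < card {i. i < n \<and> p ! i \<in> subtree n par v})"

text \<open>Driver i crosses the edge (x,y): y = par x is a vertex, x lies on the path from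
  her preferred vertex, and every vertex of the path from p!i up to x is occupied when
  she arrives (so she fails there and moves on along (x, par x)).\<close>
definition crosses :: "(nat \<Rightarrow> nat) \<Rightarrow> nat list \<Rightarrow> nat \<Rightarrow> nat \<times> nat \<Rightarrow> bool" where
  "crosses par p i e \<longleftrightarrow> (case e of (x, y) \<Rightarrow>
     y = par x \<and> y \<noteq> 0 \<and>
     (\<exists>k. (par ^^ k) (p ! i) = x \<and>
          (\<forall>j\<le>k. (par ^^ j) (p ! i) \<in> occ_before par p i)))"

definition crossed_before :: "nat \<Rightarrow> (nat \<Rightarrow> nat) \<Rightarrow> nat list \<Rightarrow> nat \<times> nat \<Rightarrow> nat \<times> nat \<Rightarrow> bool" where
  "crossed_before n par p e f \<longleftrightarrow>
     (\<exists>i<n. crosses par p i e \<and> (\<forall>j\<le>i. \<not> crosses par p j f))"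

definition P :: "nat \<Rightarrow> nat" where
  "P n = card {(par, p). is_rtree n par \<and> is_pref n p \<and> prime_pf n par p}"

datatype ptree = PNode "ptree list"

fun tsize :: "ptree \<Rightarrow> nat" where
  "tsize (PNode cs) = Suc (sum_list (map tsize cs))"

text \<open>Post-order labels of the roots of a list of sibling subtrees, where the labels
  used so far are 1..off.\<close>
fun clabels :: "nat \<Rightarrow> ptree list \<Rightarrow> nat list" where
  "clabels off [] = []"
| "clabels off (c # cs) = (off + tsize c) # clabels (off + tsize c) cs"

text \<open>Post-order labelling: a subtree whose labelling starts after off gets labels
  off+1 .. off+tsize t, its root getting the last one.  The result lists every vertex
  label together with the left-to-right list of labels of its children.\<close>
fun pnodes :: "nat \<Rightarrow> ptree \<Rightarrow> (nat \<times> nat list) list"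
and pnodes_l :: "nat \<Rightarrow> ptree list \<Rightarrow> (nat \<times> nat list) list" where
  "pnodes off (PNode cs) = pnodes_l off cs @ [(off + tsize (PNode cs), clabels off cs)]"
| "pnodes_l off [] = []"
| "pnodes_l off (c # cs) = pnodes off c @ pnodes_l (off + tsize c) cs"

text \<open>The underlying unordered rooted tree on [tsize t] (post-order labelled), as a
  parent function (root and non-vertices map to 0).\<close>
definition opar :: "ptree \<Rightarrow> nat \<Rightarrow> nat" where
  "opar t v = (if \<exists>w cl. (w, cl) \<in> set (pnodes 0 t) \<and> v \<in> set cl
               then THE w. \<exists>cl. (w, cl) \<in> set (pnodes 0 t) \<and> v \<in> set cl else 0)"

text \<open>Condition (2): for siblings u = cl!i, v = cl!j (children of w, in left-to-right
  order), v is to the right of u iff (v,w) is crossed before (u,w) is first crossed.\<close>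
definition sibling_cond :: "nat \<Rightarrow> ptree \<Rightarrow> nat list \<Rightarrow> bool" where
  "sibling_cond n t p \<longleftrightarrow>
     (\<forall>w cl. (w, cl) \<in> set (pnodes 0 t) \<longrightarrow>
        (\<forall>i j. i < length cl \<longrightarrow> j < length cl \<longrightarrow> i \<noteq> j \<longrightarrow>
           (i < j \<longleftrightarrow> crossed_before n (opar t) p (cl ! j, w) (cl ! i, w))))"

definition SRP :: "nat \<Rightarrow> (ptree \<times> nat list) set" where
  "SRP n = {(t, p). tsize t = n \<and> is_pref n p \<and> prime_pf n (opar t) p \<and> sibling_cond n t p}"

end

theory Submission
  imports Defs "HOL-Combinatorics.Permutations"
begin


definition rl :: "(nat \<Rightarrow> nat) \<Rightarrow> (nat \<Rightarrow> nat) \<Rightarrow> nat \<Rightarrow> nat" where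
  "rl s f = s \<circ> f \<circ> inv s"

lemma perm0: "(s::nat\<Rightarrow>nat) permutes {1..n} \<Longrightarrow> s 0 = 0"
  by (rule permutes_not_in[of s "{1..n}"]) simp_all

lemma rl_funpow: assumes "s permutes S" shows "(rl s f) ^^ k = rl s (f ^^ k)"
proof (induction k)
  case 0 then show ?case using permutes_inv_o[OF assms] by (simp add: rl_def fun_eq_iff)
next
  case (Suc k)
  have "(rl s f) ^^ Suc k = rl s (f^^k) \<circ> rl s f" unfolding funpow_Suc_right Suc by simp
  also have "\<dots> = rl s (f ^^ Suc k)" unfolding funpow_Suc_right rl_def
    using permutes_inverses[OF assms] by (simp add: fun_eq_iff)
  finally show ?case .
qed

lemma rl_app: assumes "s permutes S" shows "rl s f (s x) = s (f x)"
  using permutes_inverses[OF assms] by (simp add: rl_def)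

lemma rl_funpow_app: assumes "s permutes S" shows "(rl s f ^^ k) (s x) = s ((f ^^ k) x)"
  by (simp add: rl_funpow[OF assms] rl_app[OF assms])

lemma rl_comp: assumes "s permutes S" "r permutes S" shows "rl r (rl s f) = rl (r \<circ> s) f"
  unfolding rl_def using assms
  by (simp add: o_inv_distrib permutes_bij o_assoc)

lemma rl_inv: assumes "s permutes S" shows "rl (inv s) (rl s f) = f"
  unfolding rl_def using permutes_inverses[OF assms] permutes_inv_inv[OF assms]
  by (simp add: fun_eq_iff)

lemma spot_rl: assumes "s permutes S"
  shows "spot (rl s par) (s ` occ) (s a) = s (spot par occ a)"
proof -
  have inj: "inj s" using permutes_inj[OF assms] .
  have "\<And>k. ((rl s par ^^ k) (s a) \<notin> s ` occ) = ((par ^^ k) a \<notin> occ)"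
    using rl_funpow_app[OF assms] inj by (simp add: inj_image_mem_iff)
  then show ?thesis unfolding spot_def by (simp add: rl_funpow_app[OF assms])
qed

lemma fold_rl: assumes "s permutes {1..n}"
  shows "fold (\<lambda>a occ. let x = spot (rl s par) occ a in if x = 0 then occ else insert x occ) (map s ps) (s ` Oc)
   = s ` fold (\<lambda>a occ. let x = spot par occ a in if x = 0 then occ else insert x occ) ps Oc"
proof (induction ps arbitrary: Oc)
  case Nil then show ?case by simp
next
  case (Cons a ps)
  have s0: "s 0 = 0" using perm0[OF assms] .
  have inj: "inj s" using permutes_inj[OF assms] .
  have e: "(s x = 0) = (x = 0)" for x using inj s0 by (metis injD)
  show ?case
  proof (cases "spot par Oc a = 0")
    case True
    then show ?thesis using Cons.IH[of Oc] by (simp add: spot_rl[OF assms] s0)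
  next
    case False
    then have "spot (rl s par) (s ` Oc) (s a) \<noteq> 0" by (simp add: spot_rl[OF assms] e)
    then show ?thesis using False Cons.IH[of "insert (spot par Oc a) Oc"]
      by (simp add: spot_rl[OF assms] del: image_insert add: image_insert[symmetric])
  qed
qed

lemma occ_after_rl: assumes "s permutes {1..n}"
  shows "occ_after (rl s par) (map s ps) = s ` occ_after par ps"
  unfolding occ_after_def using fold_rl[OF assms, of par ps "{}"] by simp

lemma occ_before_rl: assumes "s permutes {1..n}"
  shows "occ_before (rl s par) (map s p) i = s ` occ_before par p i"
  unfolding occ_before_def by (simp add: take_map occ_after_rl[OF assms])



context
  fixes s :: "nat \<Rightarrow> nat" and n :: nat
  assumes s: "s permutes {1..n}"
begin

lemma s0: "s 0 = 0" using perm0[OF s] .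
lemma sinj: "inj s" using permutes_inj[OF s] .
lemma seq0: "(s x = 0) = (x = 0)" using inj_eq[OF sinj, of x 0] s0 by simp
lemma seq: "(s x = s y) = (x = y)" by (rule inj_eq[OF sinj])
lemma spos: "(0 < s x) = (0 < x)" using seq0[of x] by (simp only: neq0_conv[symmetric])

lemma pf_rl: assumes "length p = n" "parking_function n par p"
  shows "parking_function n (rl s par) (map s p)"
  using assms unfolding parking_function_def
  by (simp add: occ_before_rl[OF s] spot_rl[OF s] seq0)

lemma subtree_rl: "subtree n (rl s par) (s v) = s ` subtree n par v"
proof -
  have "u \<in> subtree n (rl s par) (s v) \<longleftrightarrow> u \<in> s ` subtree n par v" for u
  proof -
    obtain u0 where u: "u = s u0" using permutes_inverses(1)[OF s] by metis
    have "u \<in> {1..n} \<longleftrightarrow> u0 \<in> {1..n}" using u permutes_in_image[OF s] by simp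
    then show ?thesis unfolding subtree_def using u
      by (auto simp: rl_funpow_app[OF s] seq inj_image_mem_iff[OF sinj])
  qed
  then show ?thesis by blast
qed

lemma rl_ne0: "(rl s par (s v) \<noteq> 0) = (par v \<noteq> 0)"
  by (simp add: rl_app[OF s] seq0)

lemma prime_rl: assumes "length p = n" "prime_pf n par p"
  shows "prime_pf n (rl s par) (map s p)"
  unfolding prime_pf_def
proof (intro conjI ballI impI)
  show "parking_function n (rl s par) (map s p)" using assms pf_rl unfolding prime_pf_def by blast
  fix v assume v: "v \<in> {1..n}" "rl s par v \<noteq> 0"
  obtain v0 where v0: "v = s v0" using permutes_inverses(1)[OF s] by metis
  have v0n: "v0 \<in> {1..n}" using v v0 permutes_in_image[OF s] by simp
  have "par v0 \<noteq> 0" using v v0 rl_ne0 by simp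
  then have lt: "card (subtree n par v0) < card {i. i < n \<and> p ! i \<in> subtree n par v0}"
    using assms v0n unfolding prime_pf_def by blast
  have st: "subtree n (rl s par) v = s ` subtree n par v0" using v0 subtree_rl by simp
  have "card (subtree n (rl s par) v) = card (subtree n par v0)"
    unfolding st by (simp add: card_image inj_on_subset[OF sinj])
  moreover have "{i. i < n \<and> map s p ! i \<in> subtree n (rl s par) v} = {i. i < n \<and> p ! i \<in> subtree n par v0}"
    unfolding st using assms(1) by (auto simp: inj_image_mem_iff[OF sinj] dest: injD[OF sinj])
  ultimately show "card (subtree n (rl s par) v) < card {i. i < n \<and> map s p ! i \<in> subtree n (rl s par) v}"
    using lt by (simp only:)
qed

lemma crosses_rl: assumes "i < length p"
  shows "crosses (rl s par) (map s p) i (s x, s y) = crosses par p i (x, y)"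
  using assms unfolding crosses_def
  by (simp add: rl_app[OF s] seq seq0 spos rl_funpow_app[OF s] occ_before_rl[OF s] inj_image_mem_iff[OF sinj])

lemma cb_rl: assumes "length p = n"
  shows "crossed_before n (rl s par) (map s p) (s x, s y) (s x', s y') = crossed_before n par p (x, y) (x', y')"
proof -
  have "\<And>i. i < n \<Longrightarrow> crosses (rl s par) (map s p) i (s x, s y) = crosses par p i (x, y)"
    "\<And>i. i < n \<Longrightarrow> crosses (rl s par) (map s p) i (s x', s y') = crosses par p i (x', y')"
    using crosses_rl assms by auto
  note e = this
  show ?thesis unfolding crossed_before_def
  proof
    assume "\<exists>i<n. crosses (rl s par) (map s p) i (s x, s y) \<and> (\<forall>j\<le>i. \<not> crosses (rl s par) (map s p) j (s x', s y'))"
    then obtain i where "i < n" "crosses (rl s par) (map s p) i (s x, s y)" "\<forall>j\<le>i. \<not> crosses (rl s par) (map s p) j (s x', s y')" by blast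
    then show "\<exists>i<n. crosses par p i (x, y) \<and> (\<forall>j\<le>i. \<not> crosses par p j (x', y'))"
      using e by (intro exI[of _ i]) auto
  next
    assume "\<exists>i<n. crosses par p i (x, y) \<and> (\<forall>j\<le>i. \<not> crosses par p j (x', y'))"
    then obtain i where "i < n" "crosses par p i (x, y)" "\<forall>j\<le>i. \<not> crosses par p j (x', y')" by blast
    then show "\<exists>i<n. crosses (rl s par) (map s p) i (s x, s y) \<and> (\<forall>j\<le>i. \<not> crosses (rl s par) (map s p) j (s x', s y'))"
      using e by (intro exI[of _ i]) auto
  qed
qed

end

definition Lf :: "nat \<Rightarrow> (nat \<Rightarrow> nat) \<Rightarrow> nat list \<Rightarrow> nat \<Rightarrow> nat \<Rightarrow> bool" where
  "Lf n par p u v = crossed_before n par p (v, par v) (u, par u)"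

lemma Lf_rl: assumes "s permutes {1..n}" "length p = n"
  shows "Lf n (rl s par) (map s p) (s u) (s v) = Lf n par p u v"
  unfolding Lf_def using cb_rl[OF assms] rl_app[OF assms(1)] by simp

lemma cb_asym: "crossed_before n par p e f \<Longrightarrow> \<not> crossed_before n par p f e"
proof
  assume "crossed_before n par p e f" "crossed_before n par p f e"
  then obtain i i' where i: "crosses par p i e" "\<forall>j\<le>i. \<not> crosses par p j f"
    and i': "crosses par p i' f" "\<forall>j\<le>i'. \<not> crosses par p j e"
    unfolding crossed_before_def by blast
  show False
  proof (cases "i \<le> i'")
    case True then show False using i i' by blast
  next
    case False then have "i' \<le> i" by simp
    then show False using i(2) i'(1) by blast
  qed
qed

lemma Lf_asym: "Lf n par p u v \<Longrightarrow> \<not> Lf n par p v u"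
  unfolding Lf_def using cb_asym by blast



lemma tsize_pos: "tsize t > 0" by (cases t) simp

lemma pnodes_fst:
  "map fst (pnodes off t) = [Suc off..<Suc (off + tsize t)]"
  "map fst (pnodes_l off cs) = [Suc off..<Suc (off + sum_list (map tsize cs))]"
proof (induction off t and off cs rule: pnodes_pnodes_l.induct)
  case (1 off cs)
  then show ?case by simp
next
  case (2 off) then show ?case by simp
next
  case (3 off c cs)
  have "Suc off \<le> Suc (off + tsize c)" by simp
  then show ?case using 3 upt_add_eq_append[of "Suc off" "Suc (off + tsize c)" "sum_list (map tsize cs)"]
    by (simp add: add.assoc)
qed

lemma pnodes_snd:
  "distinct (concat (map snd (pnodes off t))) \<and> set (concat (map snd (pnodes off t))) = {Suc off..<off + tsize t}"
  "distinct (concat (map snd (pnodes_l off cs)) @ clabels off cs) \<and>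
   set (concat (map snd (pnodes_l off cs)) @ clabels off cs) = {Suc off..<Suc (off + sum_list (map tsize cs))}"
proof (induction off t and off cs rule: pnodes_pnodes_l.induct)
  case (1 off cs)
  then show ?case by simp
next
  case (2 off) then show ?case by simp
next
  case (3 off c cs)
  have p: "0 < tsize c" by (rule tsize_pos)
  define A where "A = concat (map snd (pnodes off c))"
  define B where "B = concat (map snd (pnodes_l (off + tsize c) cs))"
  define L where "L = clabels (off + tsize c) cs"
  have a: "distinct A" "set A = {Suc off..<off + tsize c}" using 3(1) A_def by auto
  have b: "distinct (B @ L)" "set (B @ L) = {Suc (off + tsize c)..<Suc (off + tsize c + sum_list (map tsize cs))}"
    using 3(2) B_def L_def by auto
  have hB: "\<forall>x\<in>set B. off + tsize c < x \<and> x < Suc (off + tsize c + sum_list (map tsize cs))"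
  proof
    fix x assume "x \<in> set B" then have "x \<in> set (B @ L)" by simp
    then show "off + tsize c < x \<and> x < Suc (off + tsize c + sum_list (map tsize cs))"
      unfolding b(2) by auto
  qed
  have hL: "\<forall>x\<in>set L. off + tsize c < x \<and> x < Suc (off + tsize c + sum_list (map tsize cs))"
  proof
    fix x assume "x \<in> set L" then have "x \<in> set (B @ L)" by simp
    then show "off + tsize c < x \<and> x < Suc (off + tsize c + sum_list (map tsize cs))"
      unfolding b(2) by auto
  qed
  have "concat (map snd (pnodes_l off (c # cs))) @ clabels off (c # cs) = A @ B @ (off + tsize c) # L"
    by (simp add: A_def B_def L_def)
  moreover have "distinct (A @ B @ (off + tsize c) # L)"
    using a b hB hL by (auto simp: distinct_append)
  moreover have "set (A @ B @ (off + tsize c) # L) = {Suc off..<Suc (off + sum_list (map tsize (c # cs)))}"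
  proof -
    have "set (A @ B @ (off + tsize c) # L) = set A \<union> {off + tsize c} \<union> set (B @ L)" by auto
    also have "\<dots> = {Suc off..<Suc (off + sum_list (map tsize (c # cs)))}"
      unfolding a(2) b(2) using p by auto
    finally show ?thesis .
  qed
  ultimately show ?case by simp
qed

lemma clabels_set: "set (clabels off cs) \<subseteq> {Suc off..<Suc (off + sum_list (map tsize cs))}"
  using pnodes_snd(2)[of off cs] by auto

lemma pnodes_lt:
  "\<forall>(w,cl)\<in>set (pnodes off t). \<forall>v\<in>set cl. v < w"
  "\<forall>(w,cl)\<in>set (pnodes_l off cs). \<forall>v\<in>set cl. v < w"
proof (induction off t and off cs rule: pnodes_pnodes_l.induct)
  case (1 off cs)
  then show ?case using clabels_set[of off cs] by fastforce
next
  case (2 off) then show ?case by simp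
next
  case (3 off c cs)
  then show ?case by auto
qed



lemma concat_snd_unique:
  "distinct (concat (map snd L)) \<Longrightarrow> (w,cl)\<in>set L \<Longrightarrow> (w',cl')\<in>set L \<Longrightarrow> v\<in>set cl \<Longrightarrow> v\<in>set cl'
   \<Longrightarrow> (w,cl) = (w',cl')"
proof (induction L)
  case Nil then show ?case by simp
next
  case (Cons x L)
  have d: "distinct (concat (map snd L))" "set (snd x) \<inter> set (concat (map snd L)) = {}"
    using Cons.prems(1) by (auto simp: distinct_append)
  show ?case
  proof (cases "(w,cl) = x")
    case True
    show ?thesis
    proof (cases "(w',cl') = x")
      case False
      then have "(w',cl')\<in>set L" using Cons.prems(3) by auto
      then have "v \<in> set (concat (map snd L))" using Cons.prems(5) by force
      then show ?thesis using d(2) True Cons.prems(4) by auto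
    qed (use True in simp)
  next
    case False
    then have L1: "(w,cl)\<in>set L" using Cons.prems(2) by auto
    show ?thesis
    proof (cases "(w',cl') = x")
      case True
      have "v \<in> set (concat (map snd L))" using Cons.prems(4) L1 by force
      then show ?thesis using d(2) True Cons.prems(5) by auto
    next
      case False
      then have "(w',cl')\<in>set L" using Cons.prems(3) by auto
      then show ?thesis using Cons.IH d(1) L1 Cons.prems(4,5) by blast
    qed
  qed
qed

lemma fst_unique: "distinct (map fst L) \<Longrightarrow> (w,cl)\<in>set L \<Longrightarrow> (w,cl')\<in>set L \<Longrightarrow> cl = cl'"
  by (rule eq_key_imp_eq_value)

context fixes t :: ptree
begin

abbreviation "PN \<equiv> set (pnodes 0 t)"
abbreviation "NN \<equiv> tsize t"

lemma PN_labels: "fst ` PN = {1..NN}"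
proof -
  have "fst ` PN = set (map fst (pnodes 0 t))" by simp
  also have "\<dots> = {1..NN}" unfolding pnodes_fst by auto
  finally show ?thesis .
qed

lemma PN_distinct: "distinct (map fst (pnodes 0 t))"
  unfolding pnodes_fst by simp

lemma PN_fun: "(w,cl)\<in>PN \<Longrightarrow> (w,cl')\<in>PN \<Longrightarrow> cl = cl'"
  using fst_unique[OF PN_distinct] by blast

lemma PN_w: "(w,cl)\<in>PN \<Longrightarrow> w \<in> {1..NN}"
  using PN_labels by force

lemma PN_ex: "w \<in> {1..NN} \<Longrightarrow> \<exists>cl. (w,cl)\<in>PN"
  using PN_labels by force

lemma PN_snd_unique: "(w,cl)\<in>PN \<Longrightarrow> (w',cl')\<in>PN \<Longrightarrow> v\<in>set cl \<Longrightarrow> v\<in>set cl' \<Longrightarrow> w = w'"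
  using concat_snd_unique[OF conjunct1[OF pnodes_snd(1)[of 0 t]]] by blast

lemma PN_cl_range: "(\<exists>w cl. (w,cl)\<in>PN \<and> v\<in>set cl) \<longleftrightarrow> v \<in> {1..<NN}"
proof -
  have "set (concat (map snd (pnodes 0 t))) = {Suc 0..<NN}" using pnodes_snd(1)[of 0 t] by simp
  moreover have "v \<in> set (concat (map snd (pnodes 0 t))) \<longleftrightarrow> (\<exists>x\<in>PN. v \<in> set (snd x))" by simp
  moreover have "(\<exists>x\<in>PN. v \<in> set (snd x)) \<longleftrightarrow> (\<exists>w cl. (w,cl)\<in>PN \<and> v\<in>set cl)"
    by (metis prod.collapse snd_conv)
  ultimately show ?thesis by simp
qed

lemma PN_cl_distinct: "(w,cl)\<in>PN \<Longrightarrow> distinct cl"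
  using conjunct1[OF pnodes_snd(1)[of 0 t]] by (auto simp: distinct_concat_iff)

lemma PN_lt: "(w,cl)\<in>PN \<Longrightarrow> v \<in> set cl \<Longrightarrow> v < w"
  using pnodes_lt(1)[of 0 t] by blast

lemma opar_eq: "(w,cl)\<in>PN \<Longrightarrow> v\<in>set cl \<Longrightarrow> opar t v = w"
  unfolding opar_def using PN_snd_unique by (auto intro!: the_equality)

lemma opar_0: "v \<notin> {1..<NN} \<Longrightarrow> opar t v = 0"
  unfolding opar_def using PN_cl_range by auto

lemma opar_cases: "opar t v = 0 \<or> (\<exists>cl. (opar t v, cl)\<in>PN \<and> v \<in> set cl)"
proof (cases "v \<in> {1..<NN}")
  case True
  then obtain w cl where "(w,cl)\<in>PN" "v\<in>set cl" using PN_cl_range by blast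
  then show ?thesis using opar_eq by auto
next
  case False then show ?thesis using opar_0 by auto
qed

lemma opar_nz: "opar t v \<noteq> 0 \<Longrightarrow> v < opar t v \<and> opar t v \<le> NN \<and> v \<in> {1..<NN}"
proof -
  assume "opar t v \<noteq> 0"
  then obtain cl where c: "(opar t v, cl)\<in>PN" "v \<in> set cl" using opar_cases[of v] by auto
  have "v < opar t v" using PN_lt[OF c] .
  moreover have "opar t v \<le> NN" using PN_w[OF c(1)] by simp
  moreover have "v \<in> {1..<NN}" using PN_cl_range c by blast
  ultimately show ?thesis by simp
qed

lemma opar_children: "(w,cl)\<in>PN \<Longrightarrow> {u. opar t u = w} = set cl"
proof -
  assume a: "(w,cl)\<in>PN"
  then have w0: "w \<noteq> 0" using PN_w by force
  show ?thesis
  proof (intro set_eqI iffI)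
    fix u assume "u \<in> {u. opar t u = w}"
    then have "opar t u = w" by simp
    then obtain cl' where "(w, cl')\<in>PN" "u\<in>set cl'" using opar_cases[of u] w0 by auto
    then show "u \<in> set cl" using PN_fun a by blast
  next
    fix u assume "u \<in> set cl" then show "u \<in> {u. opar t u = w}" using opar_eq a by simp
  qed
qed

lemma opar_root: "opar t NN = 0"
  using opar_0 by simp

lemma opar_root_unique: "v \<in> {1..NN} \<Longrightarrow> opar t v = 0 \<Longrightarrow> v = NN"
proof (rule ccontr)
  assume "v \<in> {1..NN}" "opar t v = 0" "v \<noteq> NN"
  then have "v \<in> {1..<NN}" by auto
  then obtain w cl where "(w,cl)\<in>PN" "v\<in>set cl" using PN_cl_range by blast
  then have "opar t v = w" using opar_eq by blast
  then show False using \<open>opar t v = 0\<close> \<open>(w,cl)\<in>PN\<close> PN_w by force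
qed

lemma reach0_aux: fixes f :: "nat \<Rightarrow> nat" and N :: nat shows "(\<forall>v. f v \<noteq> 0 \<longrightarrow> v < f v \<and> f v \<le> N) \<Longrightarrow> \<exists>k. (f ^^ k) v = 0"
proof (induction "N - v" arbitrary: v rule: less_induct)
  case less
  show ?case
  proof (cases "f v = 0")
    case True then show ?thesis by (intro exI[of _ 1]) simp
  next
    case False
    then have "v < f v" "f v \<le> N" using less.prems by auto
    then have "N - f v < N - v" by (simp add: diff_less_mono2)
    then obtain k where "(f ^^ k) (f v) = 0" using less by blast
    then show ?thesis by (intro exI[of _ "Suc k"]) (simp only: funpow_Suc_right o_apply)
  qed
qed

lemma opar_rtree: "is_rtree NN (opar t)"
  unfolding is_rtree_def
proof (intro conjI ballI allI impI)
  fix v assume "v \<notin> {1..NN}" then show "opar t v = 0" by (intro opar_0) auto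
next
  fix v assume "v \<in> {1..NN}" then show "opar t v \<le> NN" using opar_nz[of v] by (cases "opar t v = 0") auto
next
  have "{v \<in> {1..NN}. opar t v = 0} = {NN}"
    using opar_root_unique opar_root tsize_pos[of t] by auto
  then show "card {v \<in> {1..NN}. opar t v = 0} = 1" by simp
next
  fix v show "\<exists>k. (opar t ^^ k) v = 0" by (rule reach0_aux[of _ NN]) (use opar_nz in blast)
qed

end



fun rect :: "(nat \<times> nat list) set \<Rightarrow> nat \<Rightarrow> nat \<Rightarrow> ptree" where
  "rect S 0 w = PNode []"
| "rect S (Suc f) w = PNode (map (rect S f) (THE cl. (w,cl) \<in> S))"

definition functional :: "(nat \<times> nat list) set \<Rightarrow> bool" where
  "functional S \<longleftrightarrow> (\<forall>w cl cl'. (w,cl)\<in>S \<longrightarrow> (w,cl')\<in>S \<longrightarrow> cl = cl')"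

lemma the_cl: "functional S \<Longrightarrow> (w,cl)\<in>S \<Longrightarrow> (THE cl. (w,cl) \<in> S) = cl"
  unfolding functional_def by blast

lemma rect_inner:
  assumes IH: "\<forall>c\<in>set cs. \<forall>off f. set (pnodes off c) \<subseteq> S \<longrightarrow> tsize c \<le> f \<longrightarrow> rect S f (off + tsize c) = c"
  shows "set (pnodes_l off cs) \<subseteq> S \<Longrightarrow> sum_list (map tsize cs) \<le> f \<Longrightarrow> map (rect S f) (clabels off cs) = cs"
  using IH
proof (induction cs arbitrary: off)
  case Nil then show ?case by simp
next
  case (Cons c cs)
  have "rect S f (off + tsize c) = c" using Cons.prems by auto
  moreover have "map (rect S f) (clabels (off + tsize c) cs) = cs"
    using Cons.prems by (intro Cons.IH) auto
  ultimately show ?case by simp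
qed

lemma rect_pnodes: "functional S \<Longrightarrow> set (pnodes off t) \<subseteq> S \<Longrightarrow> tsize t \<le> f \<Longrightarrow> rect S f (off + tsize t) = t"
proof (induction t arbitrary: off f)
  case (PNode cs)
  then obtain f' where f: "f = Suc f'" "sum_list (map tsize cs) \<le> f'" by (cases f) auto
  have r: "(off + tsize (PNode cs), clabels off cs) \<in> S" using PNode.prems(2) by simp
  have "map (rect S f') (clabels off cs) = cs"
  proof (rule rect_inner)
    show "\<forall>c\<in>set cs. \<forall>off f. set (pnodes off c) \<subseteq> S \<longrightarrow> tsize c \<le> f \<longrightarrow> rect S f (off + tsize c) = c"
      using PNode.IH PNode.prems(1) by blast
    show "set (pnodes_l off cs) \<subseteq> S" using PNode.prems(2) by simp
  qed (rule f(2))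
  then show ?case using f(1) the_cl[OF PNode.prems(1) r] by simp
qed

lemma rect_transport:
  assumes fS: "functional S" and fS': "functional S'"
    and im: "\<forall>(w,cl)\<in>S. (\<tau> w, map \<tau> cl) \<in> S'"
    and cl: "\<forall>(w,cl)\<in>S. \<forall>v\<in>set cl. v \<in> fst ` S"
  shows "w \<in> fst ` S \<Longrightarrow> rect S' f (\<tau> w) = rect S f w"
proof (induction f arbitrary: w)
  case 0 then show ?case by simp
next
  case (Suc f)
  then obtain c where c: "(w,c)\<in>S" by force
  have c': "(\<tau> w, map \<tau> c) \<in> S'" using im c by blast
  have "map (rect S' f) (map \<tau> c) = map (rect S f) c"
    using Suc.IH cl c by auto
  then show ?case using the_cl[OF fS c] the_cl[OF fS' c'] by simp
qed

lemma PN_functional: "functional (set (pnodes 0 t))"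
  unfolding functional_def using PN_fun by blast

lemma iso_unique:
  assumes N: "tsize t = N" "tsize t' = N"
    and tau: "\<tau> permutes {1..N}"
    and rlt: "rl \<tau> (opar t) = opar t'"
    and im: "\<forall>(w,cl)\<in>set (pnodes 0 t). (\<tau> w, map \<tau> cl) \<in> set (pnodes 0 t')"
  shows "t = t' \<and> (\<forall>v. \<tau> v = v)"
proof -
  let ?S = "set (pnodes 0 t)" and ?S' = "set (pnodes 0 t')"
  have hom: "opar t' (\<tau> x) = \<tau> (opar t x)" for x
    using rl_app[OF tau, of "opar t" x] rlt by simp
  have t0: "\<tau> 0 = 0" using perm0[OF tau] .
  have tN: "\<tau> N = N"
  proof -
    have "opar t' (\<tau> N) = 0" using hom[of N] opar_root[of t] N t0 by simp
    moreover have "\<tau> N \<in> {1..N}" using permutes_in_image[OF tau] tsize_pos[of t] N by simp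
    ultimately show ?thesis using opar_root_unique[of "\<tau> N" t'] N by simp
  qed
  have cl: "\<forall>(w,cl)\<in>?S. \<forall>v\<in>set cl. v \<in> fst ` ?S"
  proof (intro ballI, clarify)
    fix w cl v assume "(w,cl)\<in>?S" "v\<in>set cl"
    then have "v \<in> {1..<tsize t}" using PN_cl_range by blast
    then show "v \<in> fst ` ?S" using PN_labels[of t] by auto
  qed
  have Nin: "N \<in> fst ` ?S" using PN_labels[of t] N tsize_pos[of t] by auto
  have "rect ?S' N (\<tau> N) = rect ?S N N"
    by (rule rect_transport[OF PN_functional PN_functional im cl Nin])
  moreover have "rect ?S N N = t" using rect_pnodes[OF PN_functional[of t], of 0 t N] N by simp
  moreover have "rect ?S' N N = t'" using rect_pnodes[OF PN_functional[of t'], of 0 t' N] N by simp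
  ultimately have tt: "t = t'" using tN by simp
  have fix_k: "\<forall>v\<in>{1..N}. (opar t ^^ k) v = 0 \<longrightarrow> \<tau> v = v" for k
  proof (induction k)
    case 0 then show ?case by simp
  next
    case (Suc k)
    show ?case
    proof (intro ballI impI)
      fix v assume v: "v \<in> {1..N}" "(opar t ^^ Suc k) v = 0"
      show "\<tau> v = v"
      proof (cases "opar t v = 0")
        case True
        then have "v = N" using opar_root_unique[of v t] v N by simp
        then show ?thesis using tN by simp
      next
        case False
        let ?w = "opar t v"
        obtain c where c: "(?w, c)\<in>?S" "v \<in> set c" using opar_cases[of t v] False by auto
        have wN: "?w \<in> {1..N}" using PN_w[OF c(1)] N by simp
        have "(opar t ^^ k) ?w = 0" using v(2) by (simp only: funpow_Suc_right o_apply)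
        then have tw: "\<tau> ?w = ?w" using Suc.IH wN by blast
        have "(\<tau> ?w, map \<tau> c) \<in> ?S'" using im c(1) by blast
        then have "(\<tau> ?w, map \<tau> c) \<in> ?S" using tt by simp
        then have "(?w, map \<tau> c) \<in> ?S" by (simp only: tw)
        then have "map \<tau> c = c" using PN_fun[OF _ c(1)] by blast
        then have "map \<tau> c = map id c" by simp
        then have "\<forall>x\<in>set c. \<tau> x = x" unfolding map_eq_conv by simp
        then show ?thesis using c(2) by blast
      qed
    qed
  qed
  have "\<forall>v. \<tau> v = v"
  proof
    fix v show "\<tau> v = v"
    proof (cases "v \<in> {1..N}")
      case True
      obtain k where "(opar t ^^ k) v = 0" using opar_rtree[of t] True N unfolding is_rtree_def by blast
      then show ?thesis using fix_k True by blast
    next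
      case False then show ?thesis using permutes_not_in[OF tau] by blast
    qed
  qed
  then show ?thesis using tt by simp
qed



fun build :: "(nat \<Rightarrow> nat list) \<Rightarrow> nat \<Rightarrow> nat \<Rightarrow> ptree" where
  "build ch 0 v = PNode []"
| "build ch (Suc f) v = PNode (map (build ch f) (ch v))"

fun post :: "(nat \<Rightarrow> nat list) \<Rightarrow> nat \<Rightarrow> nat \<Rightarrow> nat list" where
  "post ch 0 v = [v]"
| "post ch (Suc f) v = concat (map (post ch f) (ch v)) @ [v]"

fun okf :: "(nat \<Rightarrow> nat list) \<Rightarrow> nat \<Rightarrow> nat \<Rightarrow> bool" where
  "okf ch 0 v = (ch v = [])"
| "okf ch (Suc f) v = (\<forall>c\<in>set (ch v). okf ch f c)"

lemma tsize_build: "tsize (build ch f v) = length (post ch f v)"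
proof (induction f arbitrary: v)
  case 0 then show ?case by simp
next
  case (Suc f)
  have "tsize \<circ> build ch f = length \<circ> post ch f" using Suc.IH by (simp add: fun_eq_iff)
  then show ?case by (simp add: length_concat)
qed

lemma post_last: "\<exists>xs. post ch f v = xs @ [v]"
  by (cases f) auto

lemma labels_post:
  "okf ch f v \<Longrightarrow> (\<forall>i<length (post ch f v). g (post ch f v ! i) = Suc (off + i))
   \<Longrightarrow> pnodes off (build ch f v) = map (\<lambda>x. (g x, map g (ch x))) (post ch f v)"
proof (induction f arbitrary: v off)
  case 0 then show ?case by simp
next
  case (Suc f)
  have L: "(\<forall>c\<in>set cs. okf ch f c) \<Longrightarrow>
     (\<forall>i<length (concat (map (post ch f) cs)). g (concat (map (post ch f) cs) ! i) = Suc (off + i)) \<Longrightarrow>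
     pnodes_l off (map (build ch f) cs) = map (\<lambda>x. (g x, map g (ch x))) (concat (map (post ch f) cs)) \<and>
     clabels off (map (build ch f) cs) = map g cs" for cs off
  proof (induction cs arbitrary: off)
    case Nil then show ?case by simp
  next
    case (Cons c cs)
    let ?P = "post ch f c" and ?R = "concat (map (post ch f) cs)"
    have g1: "\<forall>i<length ?P. g (?P ! i) = Suc (off + i)"
    proof (intro allI impI)
      fix i assume i: "i < length ?P"
      then have "(?P @ ?R) ! i = ?P ! i" by (simp add: nth_append)
      moreover have "i < length (concat (map (post ch f) (c # cs)))" using i by simp
      ultimately show "g (?P ! i) = Suc (off + i)" using Cons.prems(2) by auto
    qed
    have g2: "\<forall>i<length ?R. g (?R ! i) = Suc (off + length ?P + i)"
    proof (intro allI impI)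
      fix i assume "i < length ?R"
      then show "g (?R ! i) = Suc (off + length ?P + i)"
        using Cons.prems(2) spec[OF Cons.prems(2), of "length ?P + i"] by (simp add: nth_append)
    qed
    have h1: "pnodes off (build ch f c) = map (\<lambda>x. (g x, map g (ch x))) ?P"
      using Suc.IH[of c off] Cons.prems(1) g1 by simp
    have h2: "pnodes_l (off + length ?P) (map (build ch f) cs) = map (\<lambda>x. (g x, map g (ch x))) ?R \<and>
       clabels (off + length ?P) (map (build ch f) cs) = map g cs"
      using Cons.IH[of "off + length ?P"] Cons.prems(1) g2 by simp
    obtain xs where xs: "?P = xs @ [c]" using post_last by blast
    have gc: "g c = off + length ?P"
      using g1 xs by (auto simp: nth_append)
    show ?case using h1 h2 gc by (simp add: tsize_build)
  qed
  let ?C = "concat (map (post ch f) (ch v))"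
  have gC: "\<forall>i<length ?C. g (?C ! i) = Suc (off + i)"
  proof (intro allI impI)
    fix i assume i: "i < length ?C"
    then have "(?C @ [v]) ! i = ?C ! i" by (simp add: nth_append)
    moreover have "i < length (post ch (Suc f) v)" using i by simp
    ultimately show "g (?C ! i) = Suc (off + i)" using Suc.prems(2) by auto
  qed
  have gv: "g v = Suc (off + length ?C)"
    using Suc.prems(2) spec[OF Suc.prems(2), of "length ?C"] by (simp add: nth_append)
  have "pnodes_l off (map (build ch f) (ch v)) = map (\<lambda>x. (g x, map g (ch x))) ?C \<and>
     clabels off (map (build ch f) (ch v)) = map g (ch v)"
    using L[of "ch v" off] Suc.prems(1) gC by simp
  moreover have "tsize (build ch (Suc f) v) = Suc (length ?C)" using tsize_build[of ch "Suc f" v] by simp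
  ultimately show ?case using gv by simp
qed



lemma funpow_0_fix: fixes f :: "nat \<Rightarrow> nat" shows "f 0 = 0 \<Longrightarrow> (f ^^ k) 0 = 0"
  by (induction k) auto

lemma distinct_concat_map:
  "distinct cs \<Longrightarrow> (\<forall>c\<in>set cs. distinct (F c)) \<Longrightarrow>
   (\<forall>c\<in>set cs. \<forall>c'\<in>set cs. c \<noteq> c' \<longrightarrow> set (F c) \<inter> set (F c') = {}) \<Longrightarrow> distinct (concat (map F cs))"
proof (induction cs)
  case Nil then show ?case by simp
next
  case (Cons c cs) then show ?case by (auto simp: distinct_append)
qed

context
  fixes n :: nat and par :: "nat \<Rightarrow> nat"
  assumes rt: "is_rtree n par"
begin

lemma par_out: "v \<notin> {1..n} \<Longrightarrow> par v = 0" using rt unfolding is_rtree_def by blast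
lemma par00: "par 0 = 0" using par_out by simp
lemma par_le: "par v \<le> n" using rt unfolding is_rtree_def by (cases "v \<in> {1..n}") auto
lemma par_reach: "\<exists>k. (par ^^ k) v = 0"
proof (cases "v \<in> {1..n}")
  case True then show ?thesis using rt unfolding is_rtree_def by blast
next
  case False then show ?thesis using par_out by (intro exI[of _ 1]) simp
qed
lemma parpow0: "(par ^^ k) 0 = 0" using funpow_0_fix par00 by blast

lemma parpow_le: "v \<le> n \<Longrightarrow> (par ^^ k) v \<le> n"
  by (cases k) (auto simp: par_le)

lemma no_cycle: assumes "v \<noteq> 0" "m \<ge> 1" shows "(par ^^ m) v \<noteq> v"
proof
  assume c: "(par ^^ m) v = v"
  obtain K where K: "(par ^^ K) v = 0" using par_reach by blast
  have jm: "(par ^^ (j * m)) v = v" for j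
  proof (induction j)
    case 0 then show ?case by simp
  next
    case (Suc j)
    have "(par ^^ (Suc j * m)) v = (par ^^ m) ((par ^^ (j * m)) v)" by (simp add: funpow_add)
    then show ?case using c Suc by simp
  qed
  have "K \<le> K * m" using assms(2) by simp
  then have "(par ^^ (K * m)) v = (par ^^ (K * m - K)) ((par ^^ K) v)"
    by (metis funpow_add le_add_diff_inverse2 o_apply)
  then have "(par ^^ (K * m)) v = 0" using K parpow0 by simp
  then show False using jm[of K] assms(1) by simp
qed

lemma sibling_path:
  assumes "par u = w" "par v = w" "w \<noteq> 0" "(par ^^ k) a = u" "(par ^^ m) a = v"
  shows "u = v"
proof -
  have gen: "u = v" if "k \<le> m" "par u = w" "par v = w" "(par ^^ k) a = u" "(par ^^ m) a = v" for u v k m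
  proof (rule ccontr)
    assume ne: "u \<noteq> v"
    then have "k < m" using that by (metis le_neq_implies_less)
    define d where "d = m - k - 1"
    have d: "m = Suc d + k" using \<open>k < m\<close> d_def by simp
    have "v = (par ^^ Suc d) ((par ^^ k) a)" using that(5) unfolding d funpow_add by simp
    also have "\<dots> = (par ^^ d) (par u)" using that(4) by (simp only: funpow_Suc_right o_apply)
    finally have "v = (par ^^ d) w" using that(2) by simp
    then have "(par ^^ Suc d) w = w" using that(3) by simp
    then show False using no_cycle[of w "Suc d"] assms(3) by simp
  qed
  show ?thesis
  proof (cases "k \<le> m")
    case True then show ?thesis using gen assms by blast
  next
    case False then show ?thesis using gen[of m k v u] assms by simp
  qed
qed

lemma root_ex: "\<exists>r\<in>{1..n}. par r = 0 \<and> (\<forall>x\<in>{1..n}. par x = 0 \<longrightarrow> x = r)"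
proof -
  have "card {v\<in>{1..n}. par v = 0} = 1" using rt unfolding is_rtree_def by blast
  then obtain r where "{v\<in>{1..n}. par v = 0} = {r}" by (meson card_1_singletonE)
  then show ?thesis by blast
qed

lemma reach_root: assumes r: "r \<in> {1..n}" "par r = 0" and u: "u \<in> {1..n}"
  shows "\<exists>k. (par ^^ k) u = r"
proof -
  obtain m0 where "(par ^^ m0) u = 0" using par_reach by blast
  define m where "m = (LEAST m. (par ^^ m) u = 0)"
  have m: "(par ^^ m) u = 0" unfolding m_def by (rule LeastI) fact
  have m0: "m \<noteq> 0" using m u by (intro notI) simp
  then obtain j where j: "m = Suc j" by (cases m) auto
  have x0: "(par ^^ j) u \<noteq> 0" using not_less_Least[of j "\<lambda>m. (par ^^ m) u = 0"] j m_def by auto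
  have "(par ^^ j) u \<le> n" using parpow_le u by simp
  moreover have "par ((par ^^ j) u) = 0" using m j by simp
  ultimately have "(par ^^ j) u = r" using root_ex r x0 by (metis atLeastAtMost_iff less_one not_le)
  then show ?thesis by blast
qed

lemma reach_bound: assumes "par r = 0" "r \<noteq> 0"
  shows "\<exists>f. \<forall>u\<in>{1..n}. \<forall>k. (par ^^ k) u = r \<longrightarrow> k \<le> f"
proof -
  define M where "M u = (SOME m. (par ^^ m) u = 0)" for u
  have M: "(par ^^ M u) u = 0" for u unfolding M_def by (rule someI_ex) (rule par_reach)
  have "k < M u" if "(par ^^ k) u = r" for u k
  proof (rule ccontr)
    assume "\<not> k < M u"
    then have "(par ^^ k) u = (par ^^ (k - M u)) ((par ^^ M u) u)"
      by (metis funpow_add le_add_diff_inverse2 not_less o_apply)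
    then show False using M parpow0 that assms(2) by simp
  qed
  moreover have "M u \<le> (\<Sum>x\<in>{1..n}. M x)" if "u \<in> {1..n}" for u
    by (rule member_le_sum) (use that in auto)
  ultimately show ?thesis by (intro exI[of _ "\<Sum>x\<in>{1..n}. M x"]) (meson less_imp_le_nat order_trans)
qed

context
  fixes ch :: "nat \<Rightarrow> nat list"
  assumes ch: "\<And>v. distinct (ch v)" "\<And>v. set (ch v) = {u\<in>{1..n}. par u = v}"
begin

lemma okf_bound: "(\<forall>u\<in>{1..n}. \<forall>k. (par ^^ k) u = v \<longrightarrow> k \<le> f) \<Longrightarrow> okf ch f v"
proof (induction f arbitrary: v)
  case 0
  have "ch v = []"
  proof (rule ccontr)
    assume "ch v \<noteq> []"
    then obtain c where "c \<in> set (ch v)" by (cases "ch v") auto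
    then have "c \<in> {1..n}" "(par ^^ 1) c = v" using ch(2) by auto
    then show False using 0 by fastforce
  qed
  then show ?case by simp
next
  case (Suc f)
  show ?case unfolding okf.simps
  proof
    fix c assume c: "c \<in> set (ch v)"
    then have pc: "par c = v" using ch(2) by auto
    show "okf ch f c"
    proof (rule Suc.IH, intro ballI allI impI)
      fix u k assume "u \<in> {1..n}" "(par ^^ k) u = c"
      then have "(par ^^ Suc k) u = v" using pc by simp
      then show "k \<le> f" using Suc.prems \<open>u \<in> {1..n}\<close> by fastforce
    qed
  qed
qed

lemma post_sub: "v \<in> {1..n} \<Longrightarrow> set (post ch f v) \<subseteq> {u\<in>{1..n}. \<exists>k. (par ^^ k) u = v}"
proof (induction f arbitrary: v)
  case 0 then show ?case by (auto intro: exI[of _ 0])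
next
  case (Suc f)
  show ?case
  proof
    fix u assume "u \<in> set (post ch (Suc f) v)"
    then consider "u = v" | c where "c \<in> set (ch v)" "u \<in> set (post ch f c)" by auto
    then show "u \<in> {u\<in>{1..n}. \<exists>k. (par ^^ k) u = v}"
    proof cases
      case 1 then show ?thesis using Suc.prems by (auto intro: exI[of _ 0])
    next
      case 2
      then have c: "c \<in> {1..n}" "par c = v" using ch(2) by auto
      then obtain k where "u \<in> {1..n}" "(par ^^ k) u = c" using Suc.IH[of c] 2(2) by blast
      then show ?thesis using c(2) by (auto intro!: exI[of _ "Suc k"])
    qed
  qed
qed

lemma post_sup: "okf ch f v \<Longrightarrow> v \<in> {1..n} \<Longrightarrow> u \<in> {1..n} \<Longrightarrow> (par ^^ k) u = v \<Longrightarrow> u \<in> set (post ch f v)"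
proof (induction f arbitrary: v k)
  case 0
  show ?case
  proof (cases k)
    case 0 then show ?thesis using "0.prems" by simp
  next
    case (Suc k')
    let ?c = "(par ^^ k') u"
    have pc: "par ?c = v" using "0.prems"(4) Suc by simp
    have "?c \<noteq> 0"
    proof
      assume "?c = 0" then have "v = 0" using pc par00 by simp
      then show False using "0.prems"(2) by simp
    qed
    moreover have "?c \<le> n" using parpow_le "0.prems"(3) by simp
    ultimately have "?c \<in> set (ch v)" using ch(2) pc by auto
    then show ?thesis using "0.prems"(1) by simp
  qed
next
  case (Suc f)
  show ?case
  proof (cases k)
    case 0 then show ?thesis using Suc.prems by simp
  next
    case (Suc k')
    let ?c = "(par ^^ k') u"
    have pc: "par ?c = v" using Suc.prems(4) Suc by simp
    have "?c \<noteq> 0"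
    proof
      assume "?c = 0" then have "v = 0" using pc par00 by simp
      then show False using Suc.prems(2) by simp
    qed
    moreover have "?c \<le> n" using parpow_le Suc.prems(3) by simp
    ultimately have c: "?c \<in> set (ch v)" "?c \<in> {1..n}" using ch(2) pc by auto
    then have "okf ch f ?c" using Suc.prems(1) by simp
    then have "u \<in> set (post ch f ?c)" using Suc.IH[of ?c k'] c(2) Suc.prems(3) by simp
    then show ?thesis using c(1) by auto
  qed
qed

lemma post_distinct: "v \<in> {1..n} \<Longrightarrow> distinct (post ch f v)"
proof (induction f arbitrary: v)
  case 0 then show ?case by simp
next
  case (Suc f)
  have cv: "c \<in> {1..n}" "par c = v" if "c \<in> set (ch v)" for c using that ch(2) by auto
  have d1: "distinct (concat (map (post ch f) (ch v)))"
  proof (rule distinct_concat_map)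
    show "distinct (ch v)" by (rule ch(1))
    show "\<forall>c\<in>set (ch v). distinct (post ch f c)" using Suc.IH cv by blast
    show "\<forall>c\<in>set (ch v). \<forall>c'\<in>set (ch v). c \<noteq> c' \<longrightarrow> set (post ch f c) \<inter> set (post ch f c') = {}"
    proof (intro ballI impI)
      fix c c' assume c: "c \<in> set (ch v)" "c' \<in> set (ch v)" "c \<noteq> c'"
      show "set (post ch f c) \<inter> set (post ch f c') = {}"
      proof (rule ccontr)
        assume "set (post ch f c) \<inter> set (post ch f c') \<noteq> {}"
        then obtain u where u: "u \<in> set (post ch f c)" "u \<in> set (post ch f c')" by blast
        obtain k where k: "(par ^^ k) u = c" using post_sub[of c f] cv[OF c(1)] u(1) by blast
        obtain k' where k': "(par ^^ k') u = c'" using post_sub[of c' f] cv[OF c(2)] u(2) by blast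
        have "c = c'" by (rule sibling_path[OF cv(2)[OF c(1)] cv(2)[OF c(2)] _ k k']) (use Suc.prems in auto)
        then show False using c(3) by simp
      qed
    qed
  qed
  have "v \<notin> set (concat (map (post ch f) (ch v)))"
  proof
    assume "v \<in> set (concat (map (post ch f) (ch v)))"
    then obtain c where c: "c \<in> set (ch v)" "v \<in> set (post ch f c)" by auto
    then obtain k where "(par ^^ k) v = c" using post_sub[of c f] cv[OF c(1)] by blast
    then have "(par ^^ Suc k) v = v" using cv(2)[OF c(1)] by simp
    then show False using no_cycle[of v "Suc k"] Suc.prems by simp
  qed
  then show ?case using d1 by simp
qed

end
end


lemma construct:
  assumes rt: "is_rtree n par" and ch1: "\<And>v. distinct (ch v)" and ch2: "\<And>v. set (ch v) = {u\<in>{1..n}. par u = v}"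
  shows "\<exists>t \<sigma>. tsize t = n \<and> \<sigma> permutes {1..n} \<and> rl \<sigma> (opar t) = par \<and>
           (\<forall>(w,cl)\<in>set (pnodes 0 t). ch (\<sigma> w) = map \<sigma> cl)"
proof -
  obtain r where r: "r \<in> {1..n}" "par r = 0" "\<And>x. x\<in>{1..n} \<Longrightarrow> par x = 0 \<Longrightarrow> x = r"
    using root_ex[OF rt] by blast
  obtain f where f: "\<forall>u\<in>{1..n}. \<forall>k. (par ^^ k) u = r \<longrightarrow> k \<le> f"
    using reach_bound[OF rt r(2)] r(1) by auto
  have okr: "okf ch f r" by (rule okf_bound[OF rt ch1 ch2 f])
  define L where "L = post ch f r"
  have setL: "set L = {1..n}"
  proof
    show "set L \<subseteq> {1..n}" using post_sub[OF rt ch1 ch2 r(1)] L_def by blast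
    show "{1..n} \<subseteq> set L"
    proof
      fix u assume u: "u \<in> {1..n}"
      obtain k where "(par ^^ k) u = r" using reach_root[OF rt r(1,2) u] by blast
      then show "u \<in> set L" using post_sup[OF rt ch1 ch2 okr r(1) u] L_def by blast
    qed
  qed
  have dL: "distinct L" using post_distinct[OF rt ch1 ch2 r(1)] L_def by blast
  have lenL: "length L = n" using distinct_card[OF dL] setL by simp
  define \<sigma> where "\<sigma> i = (if i \<in> {1..n} then L ! (i - 1) else i)" for i
  have inj: "inj_on \<sigma> {1..n}"
  proof
    fix i j assume ij: "i \<in> {1..n}" "j \<in> {1..n}" "\<sigma> i = \<sigma> j"
    then have "L ! (i - 1) = L ! (j - 1)" unfolding \<sigma>_def by simp
    then have "i - 1 = j - 1" using nth_eq_iff_index_eq[OF dL] ij lenL by auto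
    then show "i = j" using ij by auto
  qed
  have img: "\<sigma> ` {1..n} \<subseteq> {1..n}"
  proof
    fix y assume "y \<in> \<sigma> ` {1..n}"
    then obtain i where i: "i \<in> {1..n}" "y = \<sigma> i" by blast
    then have "y = L ! (i - 1)" unfolding \<sigma>_def by simp
    moreover have "i - 1 < length L" using i lenL by auto
    ultimately show "y \<in> {1..n}" using setL nth_mem by blast
  qed
  have bij: "bij_betw \<sigma> {1..n} {1..n}"
    unfolding bij_betw_def using inj endo_inj_surj[OF _ img inj] by simp
  have perm: "\<sigma> permutes {1..n}"
    by (rule bij_imp_permutes[OF bij]) (auto simp: \<sigma>_def)
  define g where "g = inv \<sigma>"
  have gL: "g (L ! i) = Suc i" if "i < n" for i
  proof -
    have "\<sigma> (Suc i) = L ! i" using that unfolding \<sigma>_def by simp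
    then show ?thesis unfolding g_def using permutes_inv_eq[OF perm] by blast
  qed
  have sg: "\<sigma> (g x) = x" for x unfolding g_def using permutes_inverses(1)[OF perm] .
  have gs: "g (\<sigma> x) = x" for x unfolding g_def using permutes_inverses(2)[OF perm] .
  have ginj: "g x = g y \<Longrightarrow> x = y" for x y using sg by metis
  define t where "t = build ch f r"
  have tN: "tsize t = n" unfolding t_def tsize_build L_def[symmetric] lenL ..
  have pn: "pnodes 0 t = map (\<lambda>x. (g x, map g (ch x))) L"
    unfolding t_def L_def
    by (rule labels_post[OF okr]) (use gL lenL L_def in simp)
  have PNc: "set (pnodes 0 t) = (\<lambda>x. (g x, map g (ch x))) ` {1..n}"
    unfolding pn using setL by simp
  have rlp: "rl \<sigma> (opar t) = par"
  proof
    fix v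
    show "rl \<sigma> (opar t) v = par v"
    proof (cases "v \<in> {1..n}")
      case True
      show ?thesis
      proof (cases "par v = 0")
        case False
        let ?w = "par v"
        have w: "?w \<in> {1..n}" using False par_le[OF rt, of v] by auto
        have e: "(g ?w, map g (ch ?w)) \<in> set (pnodes 0 t)" using PNc w by blast
        have "v \<in> set (ch ?w)" using ch2 True by simp
        then have "g v \<in> set (map g (ch ?w))" by simp
        then have "opar t (g v) = g ?w" using opar_eq[OF e] by blast
        then show ?thesis unfolding rl_def g_def[symmetric] using sg by simp
      next
        case z: True
        have "opar t (g v) = 0"
        proof (rule ccontr)
          assume "opar t (g v) \<noteq> 0"
          then obtain cl where cl: "(opar t (g v), cl) \<in> set (pnodes 0 t)" "g v \<in> set cl"
            using opar_cases[of t "g v"] by auto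
          then obtain x where x: "x \<in> {1..n}" "cl = map g (ch x)" using PNc by auto
          then obtain y where "y \<in> set (ch x)" "g y = g v" using cl(2) by auto
          then have "par v = x" using ginj ch2 by blast
          then show False using z x by simp
        qed
        then show ?thesis unfolding rl_def g_def[symmetric] using z perm0[OF perm] by simp
      qed
    next
      case False
      have gv: "g v = v" unfolding g_def using permutes_not_in[OF permutes_inv[OF perm] False] .
      have "opar t v = 0" using opar_0[of v t] False tN by auto
      then show ?thesis unfolding rl_def g_def[symmetric] using gv perm0[OF perm] par_out[OF rt False] by simp
    qed
  qed
  have ord: "\<forall>(w,cl)\<in>set (pnodes 0 t). ch (\<sigma> w) = map \<sigma> cl"
  proof (intro ballI, clarify)
    fix w cl assume "(w,cl) \<in> set (pnodes 0 t)"
    then obtain x where "w = g x" "cl = map g (ch x)" using PNc by auto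
    then show "ch (\<sigma> w) = map \<sigma> cl" using sg by (simp add: map_idI)
  qed
  show ?thesis using tN perm rlp ord by blast
qed



abbreviation sp :: "(nat \<Rightarrow> nat) \<Rightarrow> nat list \<Rightarrow> nat \<Rightarrow> nat" where
  "sp par p i \<equiv> spot par (occ_before par p i) (p ! i)"

lemma occ_before_Suc: "i < length p \<Longrightarrow> occ_before par p (Suc i) =
  (if sp par p i = 0 then occ_before par p i else insert (sp par p i) (occ_before par p i))"
  unfolding occ_before_def occ_after_def by (simp add: take_Suc_conv_app_nth Let_def)

lemma fold_no0: "0 \<notin> Oc \<Longrightarrow>
  0 \<notin> fold (\<lambda>a occ. let x = spot par occ a in if x = 0 then occ else insert x occ) ps Oc"
  by (induction ps arbitrary: Oc) (auto simp: Let_def)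

lemma occ_no0: "0 \<notin> occ_before par p i"
  unfolding occ_before_def occ_after_def by (rule fold_no0) simp

lemma occ_mono: "i \<le> j \<Longrightarrow> j \<le> length p \<Longrightarrow> occ_before par p i \<subseteq> occ_before par p j"
proof (induction j)
  case 0 then show ?case by simp
next
  case (Suc j)
  show ?case
  proof (cases "i = Suc j")
    case False
    then have "occ_before par p i \<subseteq> occ_before par p j" using Suc by simp
    also have "\<dots> \<subseteq> occ_before par p (Suc j)" using occ_before_Suc[of j p par] Suc.prems by auto
    finally show ?thesis .
  qed simp
qed

lemma sp_in_later: "i < j \<Longrightarrow> j \<le> length p \<Longrightarrow> sp par p i \<noteq> 0 \<Longrightarrow> sp par p i \<in> occ_before par p j"
proof -
  assume a: "i < j" "j \<le> length p" "sp par p i \<noteq> 0"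
  have "sp par p i \<in> occ_before par p (Suc i)" using occ_before_Suc[of i p par] a by simp
  also have "\<dots> \<subseteq> occ_before par p j" using occ_mono a by simp
  finally show ?thesis .
qed

context
  fixes n :: nat and par :: "nat \<Rightarrow> nat"
  assumes rt: "is_rtree n par"
begin

lemma spot_least: assumes "occ \<subseteq> {1..n}"
  shows "spot par occ a = (par ^^ (LEAST k. (par ^^ k) a \<notin> occ)) a"
    and "(par ^^ (LEAST k. (par ^^ k) a \<notin> occ)) a \<notin> occ"
    and "\<And>j. j < (LEAST k. (par ^^ k) a \<notin> occ) \<Longrightarrow> (par ^^ j) a \<in> occ"
proof -
  obtain K where "(par ^^ K) a = 0" using par_reach[OF rt] by blast
  then have ex: "\<exists>k. (par ^^ k) a \<notin> occ" using assms by (intro exI[of _ K]) auto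
  show "spot par occ a = (par ^^ (LEAST k. (par ^^ k) a \<notin> occ)) a" unfolding spot_def ..
  show "(par ^^ (LEAST k. (par ^^ k) a \<notin> occ)) a \<notin> occ" by (rule LeastI_ex[OF ex])
  show "\<And>j. j < (LEAST k. (par ^^ k) a \<notin> occ) \<Longrightarrow> (par ^^ j) a \<in> occ" using not_less_Least by blast
qed

lemma occ_sub: assumes "set p \<subseteq> {1..n}" shows "occ_before par p i \<subseteq> {1..n}"
proof -
  have "fold (\<lambda>a occ. let x = spot par occ a in if x = 0 then occ else insert x occ) ps Oc \<subseteq> {1..n}"
    if "Oc \<subseteq> {1..n}" "set ps \<subseteq> {1..n}" for ps Oc
    using that
  proof (induction ps arbitrary: Oc)
    case Nil then show ?case by simp
  next
    case (Cons a ps)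
    have "spot par Oc a \<le> n"
      unfolding spot_def by (rule parpow_le[OF rt]) (use Cons.prems in auto)
    then show ?case using Cons by (auto simp: Let_def)
  qed
  moreover have "set (take i p) \<subseteq> {1..n}" using assms set_take_subset by fastforce
  ultimately show ?thesis unfolding occ_before_def occ_after_def by simp
qed

end



definition fc :: "(nat \<Rightarrow> nat) \<Rightarrow> nat list \<Rightarrow> nat \<Rightarrow> nat" where
  "fc par p u = (LEAST i. crosses par p i (u, par u))"

definition chs :: "nat \<Rightarrow> (nat \<Rightarrow> nat) \<Rightarrow> nat list \<Rightarrow> nat \<Rightarrow> nat list" where
  "chs n par p v = sort_key (\<lambda>u. n - fc par p u) (sorted_list_of_set {u\<in>{1..n}. par u = v})"

context
  fixes n :: nat and par :: "nat \<Rightarrow> nat" and p :: "nat list"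
  assumes rt: "is_rtree n par" and pref: "is_pref n p" and pr: "prime_pf n par p"
begin

lemma lenp: "length p = n" using pref unfolding is_pref_def by simp
lemma setp: "set p \<subseteq> {1..n}" using pref unfolding is_pref_def by simp
lemma sp_nz: "i < n \<Longrightarrow> sp par p i \<noteq> 0" using pr unfolding prime_pf_def parking_function_def by blast

lemma sp_notin: "sp par p i \<notin> occ_before par p i"
  using spot_least(1,2)[OF rt occ_sub[OF rt setp]] by simp

lemma sp_inj_aux: "i < j \<Longrightarrow> j < n \<Longrightarrow> sp par p i \<noteq> sp par p j"
  using sp_in_later[of i j p par] sp_nz[of i] sp_notin[of j] lenp by auto

lemma sp_inj: "inj_on (sp par p) {i. i < n}"
proof
  fix i j assume "i \<in> {i. i < n}" "j \<in> {i. i < n}" "sp par p i = sp par p j"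
  then show "i = j" using sp_inj_aux[of i j] sp_inj_aux[of j i] by (metis mem_Collect_eq nat_neq_iff)
qed

lemma cross_exists: assumes u: "u \<in> {1..n}" "par u \<noteq> 0"
  shows "\<exists>i<n. crosses par p i (u, par u)"
proof -
  let ?S = "subtree n par u"
  let ?A = "{i. i < n \<and> p ! i \<in> ?S}"
  have pp: "\<forall>v\<in>{1..n}. par v \<noteq> 0 \<longrightarrow> card (subtree n par v) < card {i. i < n \<and> p ! i \<in> subtree n par v}"
    using pr unfolding prime_pf_def by (rule conjunct2)
  have lt: "card ?S < card ?A" using bspec[OF pp u(1)] u(2) by (rule mp)
  have "\<exists>i\<in>?A. sp par p i \<notin> ?S"
  proof (rule ccontr)
    assume "\<not> (\<exists>i\<in>?A. sp par p i \<notin> ?S)"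
    then have "sp par p ` ?A \<subseteq> ?S" by blast
    moreover have "inj_on (sp par p) ?A" by (rule inj_on_subset[OF sp_inj]) auto
    moreover have "finite ?S" unfolding subtree_def by simp
    ultimately have "card ?A \<le> card ?S" by (intro card_inj_on_le)
    then show False using lt by simp
  qed
  then obtain i where i: "i < n" "p ! i \<in> ?S" "sp par p i \<notin> ?S" by blast
  let ?a = "p ! i"
  let ?occ = "occ_before par p i"
  obtain k0 where k0: "(par ^^ k0) ?a = u" using i(2) unfolding subtree_def by blast
  have an: "?a \<le> n" using i(2) unfolding subtree_def by simp
  let ?m = "LEAST k. (par ^^ k) ?a \<notin> ?occ"
  have spm: "sp par p i = (par ^^ ?m) ?a" using spot_least(1)[OF rt occ_sub[OF rt setp]] .
  have km: "k0 < ?m"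
  proof (rule ccontr)
    assume "\<not> k0 < ?m"
    then have le: "?m \<le> k0" by simp
    let ?x = "(par ^^ ?m) ?a"
    have "(par ^^ (k0 - ?m)) ?x = u" using k0 le
      by (metis funpow_add le_add_diff_inverse2 o_apply)
    moreover have "?x \<noteq> 0"
    proof
      assume "?x = 0"
      then have "(par ^^ (k0 - ?m)) ?x = 0" using parpow0[OF rt] by simp
      then show False using \<open>(par ^^ (k0 - ?m)) ?x = u\<close> u by simp
    qed
    moreover have "?x \<le> n" using parpow_le[OF rt an] .
    ultimately have "?x \<in> ?S" unfolding subtree_def by auto
    then show False using i(3) spm by simp
  qed
  have "\<forall>j\<le>k0. (par ^^ j) ?a \<in> ?occ"
    using spot_least(3)[OF rt occ_sub[OF rt setp]] km by (meson le_less_trans)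
  then have "crosses par p i (u, par u)" unfolding crosses_def using k0 u(2) by auto
  then show ?thesis using i(1) by blast
qed

lemma fc_props: assumes "u \<in> {1..n}" "par u \<noteq> 0"
  shows "fc par p u < n" "crosses par p (fc par p u) (u, par u)" "\<And>j. j < fc par p u \<Longrightarrow> \<not> crosses par p j (u, par u)"
proof -
  obtain i where i: "i < n" "crosses par p i (u, par u)" using cross_exists[OF assms] by blast
  show "crosses par p (fc par p u) (u, par u)" unfolding fc_def by (rule LeastI[of _ i]) (rule i(2))
  have "fc par p u \<le> i" unfolding fc_def by (rule Least_le) (rule i(2))
  then show "fc par p u < n" using i(1) by simp
  show "\<And>j. j < fc par p u \<Longrightarrow> \<not> crosses par p j (u, par u)" unfolding fc_def by (rule not_less_Least)
qed

lemma cross_sib: assumes "crosses par p i (u, w)" "crosses par p i (v, w)" shows "u = v"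
proof -
  from assms(1) obtain k where k: "w = par u" "w \<noteq> 0" "(par ^^ k) (p ! i) = u" unfolding crosses_def by auto
  from assms(2) obtain m where m: "w = par v" "(par ^^ m) (p ! i) = v" unfolding crosses_def by auto
  show ?thesis by (rule sibling_path[OF rt k(1)[symmetric] m(1)[symmetric] k(2) k(3) m(2)])
qed

lemma fc_sib_ne: assumes "u \<in> {1..n}" "v \<in> {1..n}" "par u = par v" "par u \<noteq> 0" "u \<noteq> v"
  shows "fc par p u \<noteq> fc par p v"
proof
  assume e: "fc par p u = fc par p v"
  have "crosses par p (fc par p u) (u, par u)" using fc_props assms by blast
  moreover have "crosses par p (fc par p u) (v, par u)" using fc_props(2)[of v] assms e by simp
  ultimately show False using cross_sib assms(5) by blast
qed

lemma Lf_fc: assumes "u \<in> {1..n}" "v \<in> {1..n}" "par u \<noteq> 0" "par v \<noteq> 0" "fc par p v < fc par p u"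
  shows "Lf n par p u v"
  unfolding Lf_def crossed_before_def
proof (intro exI[of _ "fc par p v"] conjI allI impI)
  show "fc par p v < n" using fc_props(1)[OF assms(2,4)] .
  show "crosses par p (fc par p v) (v, par v)" using fc_props(2)[OF assms(2,4)] .
  fix j assume "j \<le> fc par p v"
  then have "j < fc par p u" using assms(5) by simp
  then show "\<not> crosses par p j (u, par u)" using fc_props(3)[OF assms(1,3)] by blast
qed

lemma chs_set: "set (chs n par p v) = {u\<in>{1..n}. par u = v}"
  unfolding chs_def by simp

lemma chs_distinct: "distinct (chs n par p v)"
  unfolding chs_def by simp

lemma chs_sorted: assumes "v \<noteq> 0" shows "sorted_wrt (Lf n par p) (chs n par p v)"
  unfolding sorted_wrt_iff_nth_less
proof (intro allI impI)
  fix i j assume ij: "i < j" "j < length (chs n par p v)"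
  let ?xs = "chs n par p v"
  have so: "sorted (map (\<lambda>u. n - fc par p u) ?xs)" unfolding chs_def by (rule sorted_sort_key)
  have le: "n - fc par p (?xs ! i) \<le> n - fc par p (?xs ! j)"
    using sorted_nth_mono[OF so, of i j] ij by simp
  have mem: "?xs ! i \<in> {u\<in>{1..n}. par u = v}" "?xs ! j \<in> {u\<in>{1..n}. par u = v}"
    using ij nth_mem[of i ?xs] nth_mem[of j ?xs] chs_set by auto
  have ne: "?xs ! i \<noteq> ?xs ! j" using ij by (simp add: nth_eq_iff_index_eq[OF chs_distinct])
  have fne: "fc par p (?xs ! i) \<noteq> fc par p (?xs ! j)"
    by (rule fc_sib_ne) (use mem ne assms in auto)
  have m1: "?xs ! i \<in> {1..n}" "par (?xs ! i) \<noteq> 0" using mem assms by auto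
  have m2: "?xs ! j \<in> {1..n}" "par (?xs ! j) \<noteq> 0" using mem assms by auto
  have "fc par p (?xs ! i) < n" "fc par p (?xs ! j) < n" using fc_props(1)[OF m1] fc_props(1)[OF m2] by auto
  then have "fc par p (?xs ! j) < fc par p (?xs ! i)" using le fne by linarith
  then show "Lf n par p (?xs ! i) (?xs ! j)" by (rule Lf_fc[OF m1(1) m2(1) m1(2) m2(2)])
qed

end



lemma rtree_rl: assumes rt: "is_rtree n par" and s: "s permutes {1..n}"
  shows "is_rtree n (rl s par)"
  unfolding is_rtree_def
proof (intro conjI ballI allI impI)
  have s0: "s 0 = 0" using perm0[OF s] .
  fix v assume v: "v \<notin> {1..n}"
  have "inv s v = v" using permutes_not_in[OF permutes_inv[OF s] v] .
  then show "rl s par v = 0" unfolding rl_def using par_out[OF rt v] s0 by simp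
next
  have s0: "s 0 = 0" using perm0[OF s] .
  fix v assume v: "v \<in> {1..n}"
  let ?x = "par (inv s v)"
  show "rl s par v \<le> n"
  proof (cases "?x = 0")
    case True then show ?thesis unfolding rl_def using s0 by simp
  next
    case False
    then have "?x \<in> {1..n}" using par_le[OF rt] by (simp add: Suc_leI)
    then have "s ?x \<in> {1..n}" using permutes_in_image[OF s] by simp
    then show ?thesis unfolding rl_def by simp
  qed
next
  have e: "{v \<in> {1..n}. rl s par v = 0} = s ` {v \<in> {1..n}. par v = 0}"
  proof (intro set_eqI iffI)
    fix v assume "v \<in> {v \<in> {1..n}. rl s par v = 0}"
    then have v: "v \<in> {1..n}" "s (par (inv s v)) = 0" unfolding rl_def by auto
    have "par (inv s v) = 0" using v(2) perm0[OF s] permutes_inj[OF s] by (metis injD)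
    moreover have "inv s v \<in> {1..n}" using v(1) permutes_in_image[OF permutes_inv[OF s]] by simp
    moreover have "v = s (inv s v)" using permutes_inverses(1)[OF s] by simp
    ultimately show "v \<in> s ` {v \<in> {1..n}. par v = 0}" by blast
  next
    fix v assume "v \<in> s ` {v \<in> {1..n}. par v = 0}"
    then obtain u where u: "u \<in> {1..n}" "par u = 0" "v = s u" by blast
    then show "v \<in> {v \<in> {1..n}. rl s par v = 0}"
      using rl_app[OF s, of par u] perm0[OF s] permutes_in_image[OF s] by simp
  qed
  have "card (s ` {v \<in> {1..n}. par v = 0}) = card {v \<in> {1..n}. par v = 0}"
    by (rule card_image) (rule inj_on_subset[OF permutes_inj_on[OF s]], auto)
  then show "card {v \<in> {1..n}. rl s par v = 0} = 1" using e rt unfolding is_rtree_def by simp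
next
  fix v
  obtain k where k: "(par ^^ k) (inv s v) = 0" using par_reach[OF rt] by blast
  have "(rl s par ^^ k) (s (inv s v)) = s ((par ^^ k) (inv s v))" by (rule rl_funpow_app[OF s])
  then have "(rl s par ^^ k) v = 0" using k perm0[OF s] permutes_inverses(1)[OF s] by simp
  then show "\<exists>k. (rl s par ^^ k) v = 0" by blast
qed

lemma pref_map: "is_pref n p \<Longrightarrow> s permutes {1..n} \<Longrightarrow> is_pref n (map s p)"
  unfolding is_pref_def using permutes_in_image by fastforce

lemma sorted_unique:
  assumes asym: "\<And>x y. R x y \<Longrightarrow> \<not> R y x"
  shows "sorted_wrt R xs \<Longrightarrow> sorted_wrt R ys \<Longrightarrow> distinct xs \<Longrightarrow> distinct ys \<Longrightarrow> set xs = set ys \<Longrightarrow> xs = ys"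
proof (induction xs arbitrary: ys)
  case Nil then show ?case by simp
next
  case (Cons x xs)
  then obtain y ys' where ys: "ys = y # ys'" by (cases ys) auto
  have "x = y"
  proof (rule ccontr)
    assume ne: "x \<noteq> y"
    have "y \<in> set xs" using Cons.prems(5) ys ne by auto
    then have "R x y" using Cons.prems(1) by simp
    moreover have "x \<in> set ys'" using Cons.prems(5) ys ne by (metis set_ConsD list.set_intros(1))
    then have "R y x" using Cons.prems(2) ys by simp
    ultimately show False using asym by blast
  qed
  moreover have "xs = ys'"
  proof (rule Cons.IH)
    show "sorted_wrt R xs" using Cons.prems(1) by simp
    show "sorted_wrt R ys'" using Cons.prems(2) ys by simp
    show "distinct xs" using Cons.prems(3) by simp
    show "distinct ys'" using Cons.prems(4) ys by simp
    show "set xs = set ys'" using Cons.prems(3-5) ys \<open>x = y\<close> by auto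
  qed
  ultimately show ?case using ys by simp
qed

lemma sib_sorted: assumes "sibling_cond n t p" "(w,cl) \<in> set (pnodes 0 t)"
  shows "sorted_wrt (Lf n (opar t) p) cl"
  unfolding sorted_wrt_iff_nth_less
proof (intro allI impI)
  fix i j assume ij: "i < j" "j < length cl"
  have "crossed_before n (opar t) p (cl ! j, w) (cl ! i, w)"
  proof -
    have "\<forall>i j. i < length cl \<longrightarrow> j < length cl \<longrightarrow> i \<noteq> j \<longrightarrow>
           (i < j \<longleftrightarrow> crossed_before n (opar t) p (cl ! j, w) (cl ! i, w))"
      using assms unfolding sibling_cond_def by blast
    note h = this[rule_format]
    have "i < length cl" "i \<noteq> j" using ij by auto
    then have "(i < j \<longleftrightarrow> crossed_before n (opar t) p (cl ! j, w) (cl ! i, w))"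
      using h ij(2) by blast
    then show ?thesis using ij(1) by simp
  qed
  moreover have "opar t (cl ! i) = w" "opar t (cl ! j) = w"
    using opar_eq[OF assms(2)] ij by auto
  ultimately show "Lf n (opar t) p (cl ! i) (cl ! j)" unfolding Lf_def by simp
qed



lemma F_into:
  assumes tp: "(t, p) \<in> SRP n" and s: "s permutes {1..n}"
  shows "is_rtree n (rl s (opar t)) \<and> is_pref n (map s p) \<and> prime_pf n (rl s (opar t)) (map s p)"
proof -
  have t: "tsize t = n" "is_pref n p" "prime_pf n (opar t) p" using tp unfolding SRP_def by auto
  have rt: "is_rtree n (opar t)" using opar_rtree[of t] t(1) by simp
  have lp: "length p = n" using t(2) unfolding is_pref_def by simp
  show ?thesis using rtree_rl[OF rt s] pref_map[OF t(2) s] prime_rl[OF s lp t(3)] by blast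
qed

lemma F_surj:
  assumes rt: "is_rtree n par" and pref: "is_pref n p" and pr: "prime_pf n par p"
  shows "\<exists>t p0 s. (t, p0) \<in> SRP n \<and> s permutes {1..n} \<and> rl s (opar t) = par \<and> map s p0 = p"
proof -
  let ?ch = "chs n par p"
  obtain t s where ts: "tsize t = n" "s permutes {1..n}" "rl s (opar t) = par"
    "\<forall>(w,cl)\<in>set (pnodes 0 t). ?ch (s w) = map s cl"
    using construct[OF rt chs_distinct[OF rt pref pr] chs_set[OF rt pref pr]] by blast
  have si: "inv s permutes {1..n}" using permutes_inv[OF ts(2)] .
  define p0 where "p0 = map (inv s) p"
  have mp: "map s p0 = p" unfolding p0_def using permutes_inverses(1)[OF ts(2)] by (simp add: map_idI)
  have lp: "length p = n" using pref unfolding is_pref_def by simp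
  have lp0: "length p0 = n" using lp p0_def by simp
  have ot: "opar t = rl (inv s) par" using rl_inv[OF ts(2), of "opar t"] ts(3) by simp
  have pr0: "prime_pf n (opar t) p0" unfolding ot p0_def by (rule prime_rl[OF si lp pr])
  have pref0: "is_pref n p0" unfolding p0_def by (rule pref_map[OF pref si])
  have cbe: "crossed_before n (opar t) p0 (x, y) (x', y') = crossed_before n par p (s x, s y) (s x', s y')" for x y x' y'
    using cb_rl[OF ts(2) lp0, of "opar t" x y x' y'] ts(3) mp by simp
  have sc: "sibling_cond n t p0"
    unfolding sibling_cond_def
  proof (intro allI impI)
    fix w cl i j assume wcl: "(w, cl) \<in> set (pnodes 0 t)" and ij: "i < length cl" "j < length cl" "i \<noteq> j"
    let ?xs = "?ch (s w)"
    have xs: "?xs = map s cl" using ts(4) wcl by blast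
    have wn: "w \<in> {1..n}" using PN_w[OF wcl] ts(1) by simp
    then have "s w \<in> {1..n}" using permutes_in_image[OF ts(2)] by simp
    then have sw: "s w \<noteq> 0" by simp
    have srt: "sorted_wrt (Lf n par p) ?xs" by (rule chs_sorted[OF rt pref pr sw])
    have len: "length ?xs = length cl" using xs by simp
    have xk: "?xs ! k = s (cl ! k)" if "k < length cl" for k using xs that by simp
    have pxk: "par (?xs ! k) = s w" if "k < length cl" for k
    proof -
      have "?xs ! k \<in> set ?xs" using that len by simp
      then show ?thesis using chs_set[OF rt pref pr] by auto
    qed
    have L: "Lf n par p (?xs ! a) (?xs ! b) \<longleftrightarrow> crossed_before n (opar t) p0 (cl ! b, w) (cl ! a, w)"
      if "a < length cl" "b < length cl" for a b
      unfolding Lf_def cbe using xk pxk that by simp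
    show "(i < j) = crossed_before n (opar t) p0 (cl ! j, w) (cl ! i, w)"
    proof (cases "i < j")
      case True
      then have "Lf n par p (?xs ! i) (?xs ! j)" using srt ij len unfolding sorted_wrt_iff_nth_less by simp
      then show ?thesis using L ij True by simp
    next
      case False
      then have "j < i" using ij by simp
      then have "Lf n par p (?xs ! j) (?xs ! i)" using srt ij len unfolding sorted_wrt_iff_nth_less by simp
      then have "\<not> Lf n par p (?xs ! i) (?xs ! j)" using Lf_asym by blast
      then show ?thesis using L ij False by simp
    qed
  qed
  have "(t, p0) \<in> SRP n" unfolding SRP_def using ts(1) pref0 pr0 sc by simp
  then show ?thesis using ts(2,3) mp by blast
qed



lemma F_inj:
  assumes tp: "(t, p) \<in> SRP n" and tp': "(t', p') \<in> SRP n"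
    and s: "s permutes {1..n}" and s': "s' permutes {1..n}"
    and e1: "rl s (opar t) = rl s' (opar t')" and e2: "map s p = map s' p'"
  shows "t = t' \<and> p = p' \<and> s = s'"
proof -
  have t: "tsize t = n" "is_pref n p" "sibling_cond n t p" using tp unfolding SRP_def by auto
  have t': "tsize t' = n" "is_pref n p'" "sibling_cond n t' p'" using tp' unfolding SRP_def by auto
  have lp: "length p = n" using t(2) unfolding is_pref_def by simp
  define \<tau> where "\<tau> = inv s' \<circ> s"
  have tau: "\<tau> permutes {1..n}" unfolding \<tau>_def by (rule permutes_compose[OF s permutes_inv[OF s']])
  have rlt: "rl \<tau> (opar t) = opar t'"
  proof -
    have "rl \<tau> (opar t) = rl (inv s') (rl s (opar t))"
      unfolding \<tau>_def using rl_comp[OF s permutes_inv[OF s']] by simp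
    also have "\<dots> = opar t'" unfolding e1 by (rule rl_inv[OF s'])
    finally show ?thesis .
  qed
  have mpt: "map \<tau> p = p'"
  proof -
    have "map \<tau> p = map (inv s') (map s p)" unfolding \<tau>_def by simp
    also have "\<dots> = p'" unfolding e2 using permutes_inverses(2)[OF s'] by (simp add: map_idI)
    finally show ?thesis .
  qed
  have hom: "opar t' u = \<tau> (opar t (inv \<tau> u))" for u using rlt unfolding rl_def by (metis o_apply)
  have im: "\<forall>(w,cl)\<in>set (pnodes 0 t). (\<tau> w, map \<tau> cl) \<in> set (pnodes 0 t')"
  proof (intro ballI, clarify)
    fix w cl assume wcl: "(w, cl) \<in> set (pnodes 0 t)"
    have wn: "w \<in> {1..n}" using PN_w[OF wcl] t(1) by simp
    then have "\<tau> w \<in> {1..tsize t'}" using permutes_in_image[OF tau] t'(1) by simp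
    then obtain cl' where cl': "(\<tau> w, cl') \<in> set (pnodes 0 t')" using PN_ex by blast
    have "map \<tau> cl = cl'"
    proof (rule sorted_unique[of "Lf n (opar t') p'"])
      show "\<And>x y. Lf n (opar t') p' x y \<Longrightarrow> \<not> Lf n (opar t') p' y x" by (rule Lf_asym)
      have "sorted_wrt (Lf n (opar t) p) cl" by (rule sib_sorted[OF t(3) wcl])
      then show "sorted_wrt (Lf n (opar t') p') (map \<tau> cl)"
        unfolding sorted_wrt_map rlt[symmetric] mpt[symmetric] using Lf_rl[OF tau lp] by simp
      show "sorted_wrt (Lf n (opar t') p') cl'" by (rule sib_sorted[OF t'(3) cl'])
      show "distinct (map \<tau> cl)" using PN_cl_distinct[OF wcl] permutes_inj[OF tau]
        by (metis distinct_map inj_on_subset subset_UNIV)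
      show "distinct cl'" by (rule PN_cl_distinct[OF cl'])
      have "set cl' = {u. opar t' u = \<tau> w}" using opar_children[OF cl'] by simp
      also have "\<dots> = \<tau> ` {u. opar t u = w}"
      proof (intro set_eqI iffI)
        fix u assume "u \<in> {u. opar t' u = \<tau> w}"
        then have "\<tau> (opar t (inv \<tau> u)) = \<tau> w" using hom by simp
        then have "opar t (inv \<tau> u) = w" using permutes_inj[OF tau] by (metis injD)
        moreover have "u = \<tau> (inv \<tau> u)" using permutes_inverses(1)[OF tau] by simp
        ultimately show "u \<in> \<tau> ` {u. opar t u = w}" by blast
      next
        fix u assume "u \<in> \<tau> ` {u. opar t u = w}"
        then obtain x where "opar t x = w" "u = \<tau> x" by blast
        then show "u \<in> {u. opar t' u = \<tau> w}" using hom permutes_inverses(2)[OF tau] by simp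
      qed
      also have "\<dots> = set (map \<tau> cl)" using opar_children[OF wcl] by simp
      finally show "set (map \<tau> cl) = set cl'" by simp
    qed
    then show "(\<tau> w, map \<tau> cl) \<in> set (pnodes 0 t')" using cl' by simp
  qed
  have u: "t = t' \<and> (\<forall>v. \<tau> v = v)" by (rule iso_unique[OF t(1) t'(1) tau rlt im])
  have ss: "s = s'"
  proof
    fix x
    have "\<tau> x = x" using u by blast
    then have "inv s' (s x) = x" unfolding \<tau>_def by simp
    then show "s x = s' x" using permutes_inverses(1)[OF s'] by metis
  qed
  have "p = p'" using mpt u by (simp add: map_idI)
  then show ?thesis using u ss by simp
qed

theorem proposition4p2:
  fixes n :: nat
  assumes "n \<ge> 1"
  shows "P n = fact n * card (SRP n)"
proof -
  define Q where "Q = {(par, p). is_rtree n par \<and> is_pref n p \<and> prime_pf n par p}"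
  define PR where "PR = {s. s permutes {1..n}}"
  define F where "F = (\<lambda>x :: (ptree \<times> nat list) \<times> (nat \<Rightarrow> nat). (rl (snd x) (opar (fst (fst x))), map (snd x) (snd (fst x))))"
  have bij: "bij_betw F (SRP n \<times> PR) Q"
    unfolding bij_betw_def
  proof
    show "inj_on F (SRP n \<times> PR)"
    proof (rule inj_onI)
      fix x y assume xy: "x \<in> SRP n \<times> PR" "y \<in> SRP n \<times> PR" "F x = F y"
      obtain t p s where x: "x = ((t, p), s)" by (metis prod.collapse)
      obtain t' p' s' where y: "y = ((t', p'), s')" by (metis prod.collapse)
      have "t = t' \<and> p = p' \<and> s = s'"
      proof (rule F_inj)
        show "(t, p) \<in> SRP n" "(t', p') \<in> SRP n" "s permutes {1..n}" "s' permutes {1..n}"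
          using xy(1,2) x y unfolding PR_def by auto
        show "rl s (opar t) = rl s' (opar t')" "map s p = map s' p'" using xy(3) x y unfolding F_def by auto
      qed
      then show "x = y" using x y by simp
    qed
    show "F ` (SRP n \<times> PR) = Q"
    proof
      show "F ` (SRP n \<times> PR) \<subseteq> Q"
      proof (rule subsetI)
        fix y assume "y \<in> F ` (SRP n \<times> PR)"
        then obtain t p s where tp: "(t, p) \<in> SRP n" "s \<in> PR" "y = F ((t, p), s)" by auto
        then have "is_rtree n (rl s (opar t)) \<and> is_pref n (map s p) \<and> prime_pf n (rl s (opar t)) (map s p)"
          using F_into unfolding PR_def by auto
        then show "y \<in> Q" using tp(3) unfolding F_def Q_def by simp
      qed
      show "Q \<subseteq> F ` (SRP n \<times> PR)"
      proof (rule subsetI)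
        fix y assume "y \<in> Q"
        obtain par p where yp: "y = (par, p)" by (metis prod.collapse)
        have "(par, p) \<in> Q" using \<open>y \<in> Q\<close> yp by simp
        then have "is_rtree n par" "is_pref n p" "prime_pf n par p" unfolding Q_def by auto
        then obtain t p0 s where "(t, p0) \<in> SRP n" "s permutes {1..n}" "rl s (opar t) = par" "map s p0 = p"
          using F_surj by blast
        then have "F ((t, p0), s) = (par, p)" "((t, p0), s) \<in> SRP n \<times> PR" unfolding F_def PR_def by auto
        then show "y \<in> F ` (SRP n \<times> PR)" using yp by (metis image_eqI)
      qed
    qed
  qed
  have "P n = card Q" unfolding P_def Q_def ..
  also have "\<dots> = card (SRP n \<times> PR)" using bij_betw_same_card[OF bij] by simp
  also have "\<dots> = card (SRP n) * card PR" by (rule card_cartesian_product)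
  also have "card PR = fact n" unfolding PR_def by (rule card_permutations) simp_all
  finally show ?thesis by simp
qed


end
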